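(* (Soundness.) For every formula $\phi$ of the language $\Phi$: if $\vdash\phi$, then $h\Vdash\phi$ for every history $h$ of every regular epistemic transition system.
   Context: Fix a set of agents $\mathcal{A}$. A coalition is a subset of $\mathcal{A}$. The language $\Phi$ is given by $\phi ::= p \mid \neg\phi \mid \phi\to\phi \mid \mathsf{K}_C\phi \mid \mathsf{H}_C\phi$, where $p$ ranges over propositional variables and $C\subseteq\mathcal{A}$; $\bot,\top$ are defined as usual. Axioms: all propositional tautologies of $\Phi$ and (1) Truth: $\mathsf{K}_C\phi\to\phi$; (2) Negative Introspection: $\neg\mathsf{K}_C\phi\to\mathsf{K}_C\neg\mathsf{K}_C\phi$; (3) Distributivity: $\mathsf{K}_C(\phi\to\psi)\to(\mathsf{K}_C\phi\to\mathsf{K}_C\psi)$; (4) Monotonicity: $\mathsf{K}_C\phi\to\mathsf{K}_D\phi$ if $C\subseteq D$; (5) Strategic Positive Introspection: $\mathsf{H}_C\phi\to\mathsf{K}_C\mathsf{H}_C\phi$; (6) Cooperation: $\mathsf{H}_C(\phi\to\psi)\to(\mathsf{H}_D\phi\to\mathsf{H}_{C\cup D}\psi)$ where $C\cap D=\varnothing$; (7) Empty Coalition: $\mathsf{K}_\varnothing\phi\to\mathsf{H}_\varnothing\phi$; (8) Perfect Recall: $\mathsf{H}_D\phi\to\mathsf{H}_D\mathsf{K}_C\phi$ where $D\subseteq C\neq\varnothing$; (9) Unachievability of Falsehood: $\neg\mathsf{H}_C\bot$. $\vdash\phi$ means $\phi$ is derivable from the axioms using Necessitation ($\phi/\mathsf{K}_C\phi$),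 Strategic Necessitation ($\phi/\mathsf{H}_C\phi$) and Modus Ponens. An epistemic transition system is a tuple $(W,\{\sim_a\}_{a\in\mathcal{A}},V,M,\pi)$ with $W$ a set of states, each $\sim_a$ an equivalence relation on $W$, $V$ a nonempty set (domain of choices), $M\subseteq W\times V^{\mathcal{A}}\times W$, and $\pi$ mapping propositional variables to subsets of $W$. It is regular if for every $w\in W$ and $\mathbf{s}\in V^{\mathcal{A}}$ there is $w'$ with $(w,\mathbf{s},w')\in M$. A strategy profile of coalition $C$ is an element of $V^C$; for profiles $\mathbf{s}_1\in V^{C_1},\mathbf{s}_2\in V^{C_2}$ and $C\subseteq C_1\cap C_2$, $\mathbf{s}_1=_C\mathbf{s}_2$ means $(\mathbf{s}_1)_a=(\mathbf{s}_2)_a$ for all $a\in C$. $w\sim_C w'$ means $w\sim_a w'$ for all $a\in C$. A history is a sequence $(w_0,\mathbf{s}_1,w_1,\dots,\mathbf{s}_n,w_n)$, $n\ge0$, with $w_i\in W$, $\mathbf{s}_i\in V^{\mathcal{A}}$, $(w_i,\mathbf{s}_{i+1},w_{i+1})\in M$ for $i<n$; $hd(h)$ is its last element and $h::\mathbf{s}::w$ denotes extension by $\mathbf{s},w$. For histories $h=(w_0,\mathbf{s}_1,\dots,w_n)$, $h'=(w'_0,\mathbf{s}'_1,\dots,w'_m)$ and agent $a$, $h\approx_a h'$ iff $n=m$, $w_i\sim_a w'_i$ for all $i$, and $(\mathbf{s}_i)_a=(\mathbf{s}'_i)_a$ for all $i$; $h\approx_C h'$ iff $h\approx_a h'$ for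 all $a\in C$ (so $\approx_\varnothing$ relates any two histories). Satisfaction: $h\Vdash p$ iff $hd(h)\in\pi(p)$; Boolean clauses as usual; $h\Vdash\mathsf{K}_C\phi$ iff $h'\Vdash\phi$ for every history $h'$ with $h\approx_C h'$; $h\Vdash\mathsf{H}_C\phi$ iff there is $\mathbf{s}\in V^C$ such that for every history $h'::\mathbf{s}'::w'$ with $h\approx_C h'$ and $\mathbf{s}=_C\mathbf{s}'$ we have $h'::\mathbf{s}'::w'\Vdash\phi$. *)

theory Defs
  imports Main
begin

datatype ('a, 'p) fm =
    Prop 'p
  | Neg "('a, 'p) fm"
  | Imp "('a, 'p) fm" "('a, 'p) fm"
  | K "'a set" "('a, 'p) fm"
  | H "'a set" "('a, 'p) fm"

definition Top :: "('a, 'p) fm" where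
  "Top = Imp (Prop undefined) (Prop undefined)"

definition Bot :: "('a, 'p) fm" where
  "Bot = Neg Top"

fun pval :: "(('a, 'p) fm \<Rightarrow> bool) \<Rightarrow> ('a, 'p) fm \<Rightarrow> bool" where
  "pval v (Prop p) = v (Prop p)"
| "pval v (Neg f) = (\<not> pval v f)"
| "pval v (Imp f g) = (pval v f \<longrightarrow> pval v g)"
| "pval v (K C f) = v (K C f)"
| "pval v (H C f) = v (H C f)"

definition tautology :: "('a, 'p) fm \<Rightarrow> bool" where
  "tautology f \<longleftrightarrow> (\<forall>v. pval v f)"

inductive derivable :: "('a, 'p) fm \<Rightarrow> bool" where
  Taut: "tautology f \<Longrightarrow> derivable f"
| Truth: "derivable (Imp (K C f) f)"
| NegIntro: "derivable (Imp (Neg (K C f)) (K C (Neg (K C f))))"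
| Distr: "derivable (Imp (K C (Imp f g)) (Imp (K C f) (K C g)))"
| Mono: "C \<subseteq> D \<Longrightarrow> derivable (Imp (K C f) (K D f))"
| SPI: "derivable (Imp (H C f) (K C (H C f)))"
| Coop: "C \<inter> D = {} \<Longrightarrow> derivable (Imp (H C (Imp f g)) (Imp (H D f) (H (C \<union> D) g)))"
| Empty: "derivable (Imp (K {} f) (H {} f))"
| Recall: "D \<subseteq> C \<Longrightarrow> C \<noteq> {} \<Longrightarrow> derivable (Imp (H D f) (H D (K C f)))"
| Unach: "derivable (Neg (H C Bot))"
| NecK: "derivable f \<Longrightarrow> derivable (K C f)"
| NecH: "derivable f \<Longrightarrow> derivable (H C f)"
| MP: "derivable (Imp f g) \<Longrightarrow> derivable f \<Longrightarrow> derivable g"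

text \<open>An epistemic transition system with agents of type 'a, states W = UNIV :: 'w,
  choice domain V = UNIV :: 'v (nonempty as every type), indistinguishability
  relations sim a, mechanism M and valuation pi. Complete strategy profiles are
  functions 'a => 'v; profiles of a coalition C are also represented by such
  functions, of which only the values on C are ever used.\<close>

record ('a, 'w, 'v, 'p) ets =
  sim :: "'a \<Rightarrow> 'w \<Rightarrow> 'w \<Rightarrow> bool"
  mech :: "'w \<Rightarrow> ('a \<Rightarrow> 'v) \<Rightarrow> 'w \<Rightarrow> bool"
  val :: "'p \<Rightarrow> 'w set"

definition is_ets :: "('a, 'w, 'v, 'p) ets \<Rightarrow> bool" where
  "is_ets E \<longleftrightarrow> (\<forall>a. equivp (sim E a))"

definition regular :: "('a, 'w, 'v, 'p) ets \<Rightarrow> bool" where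
  "regular E \<longleftrightarrow> (\<forall>w s. \<exists>w'. mech E w s w')"

text \<open>A history (w0, s1, w1, ..., sn, wn) is represented as (w0, [(s1,w1),...,(sn,wn)]).\<close>

type_synonym ('a, 'w, 'v) hist = "'w \<times> (('a \<Rightarrow> 'v) \<times> 'w) list"

fun steps_ok :: "('a, 'w, 'v, 'p) ets \<Rightarrow> 'w \<Rightarrow> (('a \<Rightarrow> 'v) \<times> 'w) list \<Rightarrow> bool" where
  "steps_ok E w [] = True"
| "steps_ok E w ((s, w') # xs) = (mech E w s w' \<and> steps_ok E w' xs)"

definition is_history :: "('a, 'w, 'v, 'p) ets \<Rightarrow> ('a, 'w, 'v) hist \<Rightarrow> bool" where
  "is_history E h \<longleftrightarrow> steps_ok E (fst h) (snd h)"

definition hd_state :: "('a, 'w, 'v) hist \<Rightarrow> 'w" where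
  "hd_state h = (if snd h = [] then fst h else snd (last (snd h)))"

definition ext :: "('a, 'w, 'v) hist \<Rightarrow> ('a \<Rightarrow> 'v) \<Rightarrow> 'w \<Rightarrow> ('a, 'w, 'v) hist" where
  "ext h s w = (fst h, snd h @ [(s, w)])"

definition states :: "('a, 'w, 'v) hist \<Rightarrow> 'w list" where
  "states h = fst h # map snd (snd h)"

definition hist_indist_a :: "('a, 'w, 'v, 'p) ets \<Rightarrow> 'a \<Rightarrow> ('a, 'w, 'v) hist \<Rightarrow> ('a, 'w, 'v) hist \<Rightarrow> bool" where
  "hist_indist_a E a h h' \<longleftrightarrow>
     length (snd h) = length (snd h') \<and>
     (\<forall>i \<le> length (snd h). sim E a (states h ! i) (states h' ! i)) \<and>
     (\<forall>i < length (snd h). fst (snd h ! i) a = fst (snd h' ! i) a)"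

definition hist_indist :: "('a, 'w, 'v, 'p) ets \<Rightarrow> 'a set \<Rightarrow> ('a, 'w, 'v) hist \<Rightarrow> ('a, 'w, 'v) hist \<Rightarrow> bool" where
  "hist_indist E C h h' \<longleftrightarrow> (\<forall>a\<in>C. hist_indist_a E a h h')"

definition eq_on :: "'a set \<Rightarrow> ('a \<Rightarrow> 'v) \<Rightarrow> ('a \<Rightarrow> 'v) \<Rightarrow> bool" where
  "eq_on C s s' \<longleftrightarrow> (\<forall>a\<in>C. s a = s' a)"

fun sat :: "('a, 'w, 'v, 'p) ets \<Rightarrow> ('a, 'w, 'v) hist \<Rightarrow> ('a, 'p) fm \<Rightarrow> bool" where
  "sat E h (Prop p) = (hd_state h \<in> val E p)"
| "sat E h (Neg f) = (\<not> sat E h f)"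
| "sat E h (Imp f g) = (sat E h f \<longrightarrow> sat E h g)"
| "sat E h (K C f) = (\<forall>h'. is_history E h' \<and> hist_indist E C h h' \<longrightarrow> sat E h' f)"
| "sat E h (H C f) = (\<exists>s. \<forall>h' s' w'. is_history E (ext h' s' w') \<and> hist_indist E C h h'
        \<and> eq_on C s s' \<longrightarrow> sat E (ext h' s' w') f)"

end

theory Submission
  imports Defs
begin

lemma sat_pval: "sat E h f = pval (\<lambda>g. sat E h g) f"
  by (induction f) auto

lemma taut_sat: "tautology f \<Longrightarrow> sat E h f"
  unfolding tautology_def using sat_pval by metis

lemma sat_Bot: "\<not> sat E h Bot"
  by (simp add: Bot_def Top_def)

lemma steps_ok_snoc:
  "steps_ok E w (xs @ [(s, w')]) = (steps_ok E w xs \<and> mech E (if xs = [] then w else snd (last xs)) s w')"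
  by (induction xs arbitrary: w) (auto split: if_splits)

lemma hist_ext:
  "is_history E (ext h s w) = (is_history E h \<and> mech E (hd_state h) s w)"
  unfolding is_history_def ext_def hd_state_def
  by (simp add: steps_ok_snoc)

lemma states_ext: "states (ext h s w) = states h @ [w]"
  by (simp add: states_def ext_def)

lemma len_states: "length (states h) = Suc (length (snd h))"
  by (simp add: states_def)

lemma ind_refl:
  assumes "is_ets E" shows "hist_indist E C h h"
proof -
  have "\<And>a x. sim E a x x" using assms unfolding is_ets_def by (meson equivp_reflp)
  thus ?thesis unfolding hist_indist_def hist_indist_a_def by auto
qed

lemma ind_sym:
  assumes "is_ets E" "hist_indist E C h h'" shows "hist_indist E C h' h"
proof -
  have "\<And>a x y. sim E a x y \<Longrightarrow> sim E a y x" using assms unfolding is_ets_def by (meson equivp_symp)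
  thus ?thesis using assms(2) unfolding hist_indist_def hist_indist_a_def by auto
qed

lemma ind_trans:
  assumes "is_ets E" "hist_indist E C h h'" "hist_indist E C h' h''" shows "hist_indist E C h h''"
proof -
  have "\<And>a x y z. sim E a x y \<Longrightarrow> sim E a y z \<Longrightarrow> sim E a x z" using assms unfolding is_ets_def by (meson equivp_transp)
  thus ?thesis using assms(2,3) unfolding hist_indist_def hist_indist_a_def by (metis (no_types, lifting))
qed

lemma ind_mono: "hist_indist E D h h' \<Longrightarrow> C \<subseteq> D \<Longrightarrow> hist_indist E C h h'"
  unfolding hist_indist_def by auto

lemma ind_ext:
  assumes "hist_indist E C (ext h1 s1 w1) (ext h2 s2 w2)"
  shows "hist_indist E C h1 h2 \<and> eq_on C s1 s2"
proof -
  { fix a assume a: "a \<in> C"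
    hence A: "hist_indist_a E a (ext h1 s1 w1) (ext h2 s2 w2)" using assms unfolding hist_indist_def by blast
    have sn1: "snd (ext h1 s1 w1) = snd h1 @ [(s1,w1)]" and sn2: "snd (ext h2 s2 w2) = snd h2 @ [(s2,w2)]"
      by (simp_all add: ext_def)
    have L: "length (snd h1) = length (snd h2)" using A unfolding hist_indist_a_def sn1 sn2 by simp
    have A2: "\<forall>i \<le> length (snd (ext h1 s1 w1)). sim E a (states (ext h1 s1 w1) ! i) (states (ext h2 s2 w2) ! i)"
      and A3: "\<forall>i < length (snd (ext h1 s1 w1)). fst (snd (ext h1 s1 w1) ! i) a = fst (snd (ext h2 s2 w2) ! i) a"
      using A unfolding hist_indist_a_def by blast+
    have "hist_indist_a E a h1 h2"
      unfolding hist_indist_a_def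
    proof (intro conjI allI impI)
      show "length (snd h1) = length (snd h2)" by fact
    next
      fix i assume i: "i \<le> length (snd h1)"
      have "i \<le> length (snd (ext h1 s1 w1))" using i sn1 by simp
      hence "sim E a (states (ext h1 s1 w1) ! i) (states (ext h2 s2 w2) ! i)" using A2 by blast
      moreover have "states (ext h1 s1 w1) ! i = states h1 ! i"
        unfolding states_ext using i len_states[of h1] by (simp add: nth_append)
      moreover have "states (ext h2 s2 w2) ! i = states h2 ! i"
        unfolding states_ext using i L len_states[of h2] by (simp add: nth_append)
      ultimately show "sim E a (states h1 ! i) (states h2 ! i)" by simp
    next
      fix i assume i: "i < length (snd h1)"
      have "i < length (snd (ext h1 s1 w1))" using i sn1 by simp
      hence "fst (snd (ext h1 s1 w1) ! i) a = fst (snd (ext h2 s2 w2) ! i) a" using A3 by blast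
      thus "fst (snd h1 ! i) a = fst (snd h2 ! i) a"
        using i L unfolding sn1 sn2 by (simp add: nth_append)
    qed
    moreover have "s1 a = s2 a"
    proof -
      have "length (snd h1) < length (snd (ext h1 s1 w1))" using sn1 by simp
      hence "fst (snd (ext h1 s1 w1) ! length (snd h1)) a = fst (snd (ext h2 s2 w2) ! length (snd h1)) a"
        using A3 by blast
      thus ?thesis using L unfolding sn1 sn2 by (simp add: nth_append)
    qed
    ultimately have "hist_indist_a E a h1 h2 \<and> s1 a = s2 a" by blast }
  thus ?thesis unfolding hist_indist_def eq_on_def by blast
qed

lemma hist_decomp:
  assumes "snd h \<noteq> []"
  shows "\<exists>h0 s w. h = ext h0 s w"
proof -
  obtain s w where "last (snd h) = (s, w)" by (cases "last (snd h)")
  hence "h = ext (fst h, butlast (snd h)) s w"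
    using assms by (simp add: ext_def) (metis append_butlast_last_id prod.collapse)
  thus ?thesis by blast
qed

lemma ind_len: "hist_indist E C h h' \<Longrightarrow> C \<noteq> {} \<Longrightarrow> length (snd h) = length (snd h')"
  unfolding hist_indist_def hist_indist_a_def by auto

lemma main:
  assumes "derivable f" "is_ets E" "regular E"
  shows "\<forall>h. is_history E h \<longrightarrow> sat E h f"
  using assms(1)
proof (induction f rule: derivable.induct)
  case (Taut f) thus ?case using taut_sat by blast
next
  case (Truth C f) thus ?case using ind_refl[OF assms(2), of C] by simp
next
  case (NegIntro C f)
  show ?case
  proof (intro allI impI)
    fix h assume "is_history E h"
    show "sat E h (Imp (Neg (K C f)) (K C (Neg (K C f))))"
    proof (simp only: sat.simps, intro impI allI)
      assume "\<not> (\<forall>h'. is_history E h' \<and> hist_indist E C h h' \<longrightarrow> sat E h' f)"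
      then obtain g where g: "is_history E g" "hist_indist E C h g" "\<not> sat E g f" by blast
      fix h' assume h': "is_history E h' \<and> hist_indist E C h h'"
      have "hist_indist E C h' g" using ind_trans[OF assms(2) ind_sym[OF assms(2)] g(2)] h' by blast
      thus "\<not> (\<forall>h''. is_history E h'' \<and> hist_indist E C h' h'' \<longrightarrow> sat E h'' f)" using g by blast
    qed
  qed
next
  case (Distr C f g) thus ?case by (simp only: sat.simps) blast
next
  case (Mono C D f) thus ?case using ind_mono[of E D _ _ C] by (simp only: sat.simps) blast
next
  case (SPI C f)
  show ?case
  proof (intro allI impI)
    fix h assume "is_history E h"
    show "sat E h (Imp (H C f) (K C (H C f)))"
    proof (simp only: sat.simps, intro impI allI)
      assume "\<exists>s. \<forall>h' s' w'. is_history E (ext h' s' w') \<and> hist_indist E C h h' \<and> eq_on C s s' \<longrightarrow> sat E (ext h' s' w') f"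
      then obtain s where s: "\<forall>h' s' w'. is_history E (ext h' s' w') \<and> hist_indist E C h h' \<and> eq_on C s s' \<longrightarrow> sat E (ext h' s' w') f" by blast
      fix g assume g: "is_history E g \<and> hist_indist E C h g"
      have "\<forall>h' s' w'. is_history E (ext h' s' w') \<and> hist_indist E C g h' \<and> eq_on C s s' \<longrightarrow> sat E (ext h' s' w') f"
      proof (intro allI impI)
        fix h' s' w' assume a: "is_history E (ext h' s' w') \<and> hist_indist E C g h' \<and> eq_on C s s'"
        have "hist_indist E C h h'" using ind_trans[OF assms(2), of C h g h'] g a by blast
        thus "sat E (ext h' s' w') f" using s a by blast
      qed
      thus "\<exists>s. \<forall>h' s' w'. is_history E (ext h' s' w') \<and> hist_indist E C g h' \<and> eq_on C s s' \<longrightarrow> sat E (ext h' s' w') f" by blast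
    qed
  qed
next
  case (Coop C D f g)
  show ?case
  proof (intro allI impI)
    fix h assume "is_history E h"
    show "sat E h (Imp (H C (Imp f g)) (Imp (H D f) (H (C \<union> D) g)))"
    proof (simp only: sat.simps, intro impI)
      assume "\<exists>s. \<forall>h' s' w'. is_history E (ext h' s' w') \<and> hist_indist E C h h' \<and> eq_on C s s' \<longrightarrow>
             sat E (ext h' s' w') f \<longrightarrow> sat E (ext h' s' w') g"
      then obtain s1 where s1: "\<forall>h' s' w'. is_history E (ext h' s' w') \<and> hist_indist E C h h' \<and> eq_on C s1 s' \<longrightarrow>
             sat E (ext h' s' w') f \<longrightarrow> sat E (ext h' s' w') g" by blast
      assume "\<exists>s. \<forall>h' s' w'. is_history E (ext h' s' w') \<and> hist_indist E D h h' \<and> eq_on D s s' \<longrightarrow>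
             sat E (ext h' s' w') f"
      then obtain s2 where s2: "\<forall>h' s' w'. is_history E (ext h' s' w') \<and> hist_indist E D h h' \<and> eq_on D s2 s' \<longrightarrow>
             sat E (ext h' s' w') f" by blast
      define s where "s = (\<lambda>a. if a \<in> C then s1 a else s2 a)"
      have "\<forall>h' s' w'. is_history E (ext h' s' w') \<and> hist_indist E (C \<union> D) h h' \<and> eq_on (C \<union> D) s s' \<longrightarrow>
             sat E (ext h' s' w') g"
      proof (intro allI impI)
        fix h' s' w' assume a: "is_history E (ext h' s' w') \<and> hist_indist E (C \<union> D) h h' \<and> eq_on (C \<union> D) s s'"
        have e: "\<forall>x\<in>C \<union> D. s x = s' x" using a unfolding eq_on_def by blast
        have "eq_on C s1 s'" unfolding eq_on_def
        proof
          fix x assume "x \<in> C" thus "s1 x = s' x" using e unfolding s_def by (metis UnI1)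
        qed
        moreover have "eq_on D s2 s'" unfolding eq_on_def
        proof
          fix x assume x: "x \<in> D" hence "x \<notin> C" using Coop(1) by blast
          thus "s2 x = s' x" using e x unfolding s_def by (metis UnI2)
        qed
        moreover have "hist_indist E C h h'" "hist_indist E D h h'" using a ind_mono[of E "C \<union> D" h h'] by blast+
        ultimately show "sat E (ext h' s' w') g" using a s1 s2 by blast
      qed
      thus "\<exists>s. \<forall>h' s' w'. is_history E (ext h' s' w') \<and> hist_indist E (C \<union> D) h h' \<and> eq_on (C \<union> D) s s' \<longrightarrow>
             sat E (ext h' s' w') g" by blast
    qed
  qed
next
  case (Empty f)
  have i: "\<And>h h'. hist_indist E {} h h'" by (simp add: hist_indist_def)
  show ?case
  proof (intro allI impI)
    fix h assume h: "is_history E h"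
    show "sat E h (Imp (K {} f) (H {} f))"
    proof (simp only: sat.simps, intro impI)
      assume k: "\<forall>h'. is_history E h' \<and> hist_indist E {} h h' \<longrightarrow> sat E h' f"
      show "\<exists>s. \<forall>h' s' w'. is_history E (ext h' s' w') \<and> hist_indist E {} h h' \<and> eq_on {} s s' \<longrightarrow> sat E (ext h' s' w') f"
        using k i by blast
    qed
  qed
next
  case (Recall D C f)
  show ?case
  proof (intro allI impI)
    fix h assume "is_history E h"
    show "sat E h (Imp (H D f) (H D (K C f)))"
    proof (simp only: sat.simps, intro impI)
      assume "\<exists>s. \<forall>h' s' w'. is_history E (ext h' s' w') \<and> hist_indist E D h h' \<and> eq_on D s s' \<longrightarrow>
             sat E (ext h' s' w') f"
      then obtain s where s: "\<forall>h' s' w'. is_history E (ext h' s' w') \<and> hist_indist E D h h' \<and> eq_on D s s' \<longrightarrow>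
             sat E (ext h' s' w') f" by blast
      have "\<forall>h' s' w'. is_history E (ext h' s' w') \<and> hist_indist E D h h' \<and> eq_on D s s' \<longrightarrow>
             (\<forall>h''. is_history E h'' \<and> hist_indist E C (ext h' s' w') h'' \<longrightarrow> sat E h'' f)"
      proof (intro allI impI)
        fix h' s' w' h'' assume a: "is_history E (ext h' s' w') \<and> hist_indist E D h h' \<and> eq_on D s s'"
          and b: "is_history E h'' \<and> hist_indist E C (ext h' s' w') h''"
        have "length (snd h'') = length (snd (ext h' s' w'))" using b ind_len[of E C "ext h' s' w'" h''] Recall(2) by simp
        hence "snd h'' \<noteq> []" by (auto simp add: ext_def)
        then obtain h0 s0 w0 where h0: "h'' = ext h0 s0 w0" using hist_decomp by blast
        have "hist_indist E D (ext h' s' w') h''" using ind_mono[of E C "ext h' s' w'" h'' D] b Recall(1) by blast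
        hence c: "hist_indist E D h' h0 \<and> eq_on D s' s0" using ind_ext h0 by simp
        have "hist_indist E D h h0" using ind_trans[OF assms(2), of D h h' h0] a c by blast
        moreover have "eq_on D s s0" using a c unfolding eq_on_def by auto
        ultimately show "sat E h'' f" using s b h0 by blast
      qed
      thus "\<exists>s. \<forall>h' s' w'. is_history E (ext h' s' w') \<and> hist_indist E D h h' \<and> eq_on D s s' \<longrightarrow>
             (\<forall>h''. is_history E h'' \<and> hist_indist E C (ext h' s' w') h'' \<longrightarrow> sat E h'' f)" by blast
    qed
  qed
next
  case (Unach C)
  show ?case
  proof (intro allI impI)
    fix h assume h: "is_history E h"
    show "sat E h (Neg (H C Bot))"
    proof -
      have "\<exists>h' s' w'. is_history E (ext h' s' w') \<and> hist_indist E C h h' \<and> eq_on C s s'" for s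
      proof -
      obtain w where "mech E (hd_state h) s w" using assms(3) unfolding regular_def by blast
      hence "is_history E (ext h s w)" using h hist_ext[of E h s w] by simp
      moreover have "hist_indist E C h h" using ind_refl[OF assms(2)] .
      moreover have "eq_on C s s" by (simp add: eq_on_def)
      ultimately show "\<exists>h' s' w'. is_history E (ext h' s' w') \<and> hist_indist E C h h' \<and> eq_on C s s'" by blast
      qed
      thus ?thesis using sat_Bot by (simp only: sat.simps) blast
    qed
  qed
next
  case (NecK f C) thus ?case by (simp only: sat.simps) blast
next
  case (NecH f C) thus ?case by (simp only: sat.simps) blast
next
  case (MP f g) thus ?case by (simp only: sat.simps) blast
qed

theorem theorem1:
  fixes f :: "('a, 'p) fm" and E :: "('a, 'w, 'v, 'p) ets" and h :: "('a, 'w, 'v) hist"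
  assumes "derivable f"
    and "is_ets E" and "regular E"
    and "is_history E h"
  shows "sat E h f"
  using main[OF assms(1-3)] assms(4) by blast

end
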